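(* For every positive integer $n$ there exist a line $\ell$ in $\mathbb{R}^3$ and a finite family of convex polytopes in $\mathbb{R}^3$ of size at least $n$ that is a minimal pinning of $\ell$.
   Context: A line $\ell$ is a transversal to a family $\mathcal{F}$ of convex polytopes if it intersects every member of $\mathcal{F}$. $\mathcal{F}$ pins $\ell$ if $\ell$ is a transversal to $\mathcal{F}$ and $\ell$ is an isolated point of the space of line transversals to $\mathcal{F}$ (in the space of lines with its usual topology). $\mathcal{F}$ is a minimal pinning of $\ell$ if it pins $\ell$ and no proper subfamily of $\mathcal{F}$ pins $\ell$. (The polytopes are allowed to intersect each other and to have facets coplanar with $\ell$.) *)

theory Defs
  imports "HOL-Analysis.Analysis"
begin

definition line_of :: "real^3 \<Rightarrow> real^3 \<Rightarrow> (real^3) set" where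
  "line_of p d = {p + t *\<^sub>R d | t. True}"

definition is_line :: "(real^3) set \<Rightarrow> bool" where
  "is_line L \<longleftrightarrow> (\<exists>p d. d \<noteq> 0 \<and> L = line_of p d)"

text \<open>Usual topology on the space of lines: the quotient topology from the
  parametrisation (p,d) with d nonzero.\<close>

definition open_lines :: "(real^3) set set \<Rightarrow> bool" where
  "open_lines V \<longleftrightarrow> (\<forall>L\<in>V. is_line L) \<and>
     open {(p, d). d \<noteq> 0 \<and> line_of p d \<in> V}"

definition line_transversal :: "(real^3) set \<Rightarrow> (real^3) set set \<Rightarrow> bool" where
  "line_transversal L F \<longleftrightarrow> is_line L \<and> (\<forall>P\<in>F. L \<inter> P \<noteq> {})"

definition pins :: "(real^3) set set \<Rightarrow> (real^3) set \<Rightarrow> bool" where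
  "pins F L \<longleftrightarrow> line_transversal L F \<and>
     (\<exists>V. open_lines V \<and> L \<in> V \<and> (\<forall>M\<in>V. line_transversal M F \<longrightarrow> M = L))"

definition minimal_pinning :: "(real^3) set set \<Rightarrow> (real^3) set \<Rightarrow> bool" where
  "minimal_pinning F L \<longleftrightarrow> pins F L \<and> (\<forall>G. G \<subset> F \<longrightarrow> \<not> pins G L)"

end

theory Submission
  imports Defs
begin

definition pt :: "real \<Rightarrow> real \<Rightarrow> real \<Rightarrow> real^3" where
  "pt x y z = vector [x,y,z]"

lemma pt_nth [simp]: "pt x y z $ 1 = x" "pt x y z $ 2 = y" "pt x y z $ 3 = z"
  by (simp_all add: pt_def)

lemma vec3_eq_iff: "(v::real^3) = w \<longleftrightarrow> v$1 = w$1 \<and> v$2 = w$2 \<and> v$3 = w$3"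
  by (simp add: vec_eq_iff forall_3)

lemma pt_add [simp]: "pt a b c + pt d e f = pt (a+d) (b+e) (c+f)"
  by (simp add: vec3_eq_iff)
lemma pt_diff [simp]: "pt a b c - pt d e f = pt (a-d) (b-e) (c-f)"
  by (simp add: vec3_eq_iff)
lemma pt_scale [simp]: "r *\<^sub>R pt a b c = pt (r*a) (r*b) (r*c)"
  by (simp add: vec3_eq_iff)
lemma pt_zero: "pt 0 0 0 = 0"
  by (simp add: vec3_eq_iff)
lemma pt_eq [simp]: "pt a b c = pt d e f \<longleftrightarrow> a = d \<and> b = e \<and> c = f"
  by (simp add: vec3_eq_iff)

lemma pt_eq0 [simp]: "pt a b c = 0 \<longleftrightarrow> a = 0 \<and> b = 0 \<and> c = 0"
  by (simp add: vec3_eq_iff)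

definition L0 :: "(real^3) set" where "L0 = line_of 0 (pt 1 0 0)"

definition VV :: "(real^3) set set" where
  "VV = {M. \<exists>p d. d$1 \<noteq> 0 \<and> M = line_of p d}"

lemma line_of_eq_dir:
  assumes "line_of p d = line_of p' d'"
  shows "\<exists>c. d = c *\<^sub>R d'"
proof -
  have "p \<in> line_of p' d'" using assms unfolding line_of_def by (metis (mono_tags, lifting) add.right_neutral mem_Collect_eq scale_zero_left)
  then obtain t1 where t1: "p = p' + t1 *\<^sub>R d'" unfolding line_of_def by blast
  have "p + 1 *\<^sub>R d \<in> line_of p' d'" using assms unfolding line_of_def by blast
  then obtain t2 where t2: "p + d = p' + t2 *\<^sub>R d'" unfolding line_of_def by auto
  have "d = (t2 - t1) *\<^sub>R d'" using t1 t2 by (simp add: algebra_simps)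
  then show ?thesis by blast
qed

lemma open_VV: "open_lines VV"
proof -
  have "{(p, d). d \<noteq> 0 \<and> line_of p d \<in> VV} = {z :: (real^3) \<times> (real^3). snd z $ 1 \<noteq> 0}"
  proof -
    have "snd z $ 1 \<noteq> 0" if h: "snd z \<noteq> 0" "line_of (fst z) (snd z) \<in> VV" for z :: "(real^3) \<times> (real^3)"
    proof -
      obtain p' d' where "d'$1 \<noteq> 0" "line_of (fst z) (snd z) = line_of p' d'" using h(2) unfolding VV_def by blast
      then obtain c where c: "snd z = c *\<^sub>R d'" using line_of_eq_dir by blast
      with h(1) have "c \<noteq> 0" by auto
      then show ?thesis using c \<open>d'$1 \<noteq> 0\<close> by simp
    qed
    moreover have "snd z \<noteq> 0 \<and> line_of (fst z) (snd z) \<in> VV" if "snd z $ 1 \<noteq> 0" for z :: "(real^3) \<times> (real^3)"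
      using that unfolding VV_def by force
    ultimately show ?thesis by (auto simp: case_prod_beta)
  qed
  moreover have "open {z :: (real^3) \<times> (real^3). snd z $ 1 \<noteq> 0}"
    by (rule open_Collect_neq) (auto intro!: continuous_intros)
  moreover have "\<forall>L\<in>VV. is_line L" unfolding VV_def is_line_def
  proof clarify
    fix p d :: "real^3" assume "d$1 \<noteq> 0"
    then have "d \<noteq> 0" by auto
    then show "\<exists>pa da. da \<noteq> 0 \<and> line_of p d = line_of pa da" by blast
  qed
  ultimately show ?thesis unfolding open_lines_def by simp
qed

lemma L0_in_VV: "L0 \<in> VV" unfolding L0_def VV_def by force

lemma witness_in_V:
  assumes V: "open_lines V" and L: "L0 \<in> V"
  shows "\<exists>e>0. e \<le> 1 \<and> line_of (pt 0 (e*Y0) (e*Z0)) (pt 1 (e*DY) (e*DZ)) \<in> V"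
proof -
  let ?O = "{(p, d). d \<noteq> 0 \<and> line_of p d \<in> V}"
  have O: "open ?O" using V unfolding open_lines_def by blast
  have c: "(0, pt 1 0 0) \<in> ?O" using L unfolding L0_def by simp
  obtain r where r: "r > 0" "ball (0, pt 1 0 0) r \<subseteq> ?O"
    using open_contains_ball_eq[OF O] c by blast
  define K where "K = norm (pt 0 Y0 Z0) + norm (pt 0 DY DZ) + 1"
  have K: "K > 0" unfolding K_def by (smt (verit) norm_ge_zero)
  define e where "e = min 1 (r / (2*K))"
  have e: "e > 0" "e \<le> 1" "e * K < r" using r K unfolding e_def
    by (auto simp: min_def field_simps)
  have "dist (pt 0 (e*Y0) (e*Z0), pt 1 (e*DY) (e*DZ)) (0, pt 1 0 0)
      = sqrt ((norm (e *\<^sub>R pt 0 Y0 Z0))\<^sup>2 + (norm (e *\<^sub>R pt 0 DY DZ))\<^sup>2)"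
    by (simp add: dist_Pair_Pair dist_norm norm_Pair)
  also have "\<dots> \<le> norm (e *\<^sub>R pt 0 Y0 Z0) + norm (e *\<^sub>R pt 0 DY DZ)"
    using sqrt_sum_squares_le_sum_abs[of "norm (e *\<^sub>R pt 0 Y0 Z0)" "norm (e *\<^sub>R pt 0 DY DZ)"] by simp
  also have "\<dots> = e * (norm (pt 0 Y0 Z0) + norm (pt 0 DY DZ))"
    using e by (simp add: algebra_simps del: pt_scale)
  also have "\<dots> < r" using e(1,3) unfolding K_def
    by (smt (verit, ccfv_SIG) mult_left_mono)
  finally have "(pt 0 (e*Y0) (e*Z0), pt 1 (e*DY) (e*DZ)) \<in> ?O"
    using r(2) unfolding ball_def by (auto simp: dist_commute subset_iff)
  then show ?thesis using e by auto
qed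

lemma inner_pt: "inner (pt a b c) v = a * v$1 + b * v$2 + c * v$3"
  by (simp add: inner_vec_def sum_3)

definition fin :: "real \<Rightarrow> real \<Rightarrow> real \<Rightarrow> real \<Rightarrow> real \<Rightarrow> (real^3) set" where
  "fin a b n1 n2 C = convex hull
     {pt a (-(C*n2)) (C*n1), pt a (C*n2) (-(C*n1)), pt a (C*n1) (C*n2),
      pt b (-(C*n2)) (C*n1), pt b (C*n2) (-(C*n1)), pt b (C*n1) (C*n2)}"

lemma fin_sub:
  assumes "a \<le> b" "C \<ge> 0"
  shows "fin a b n1 n2 C \<subseteq> {v. a \<le> v$1 \<and> v$1 \<le> b \<and> 0 \<le> n1 * v$2 + n2 * v$3}"
proof -
  have eq: "{v::real^3. a \<le> v$1 \<and> v$1 \<le> b \<and> 0 \<le> n1 * v$2 + n2 * v$3} =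
     {v. inner (pt 1 0 0) v \<ge> a} \<inter> {v. inner (pt 1 0 0) v \<le> b} \<inter> {v. inner (pt 0 n1 n2) v \<ge> 0}"
    by (auto simp: inner_pt)
  have cv: "convex {v::real^3. a \<le> v$1 \<and> v$1 \<le> b \<and> 0 \<le> n1 * v$2 + n2 * v$3}"
    unfolding eq by (intro convex_Int convex_halfspace_ge convex_halfspace_le)
  have "0 \<le> C * (n1*n1 + n2*n2)" using assms by simp
  then have "0 \<le> n1 * (C * n1) + n2 * (C * n2)" by (simp add: algebra_simps)
  then show ?thesis unfolding fin_def using assms
    by (intro hull_minimal) (use cv in \<open>auto simp: algebra_simps\<close>)
qed

lemma fin_mem:
  assumes ab: "a < b" "a \<le> x" "x \<le> b" and C: "C > 0" and s: "n1^2 + n2^2 > 0"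
    and u: "0 \<le> n1*y + n2*z" and uw: "n1*y + n2*z + \<bar>-n2*y + n1*z\<bar> \<le> C*(n1^2+n2^2)"
  shows "pt x y z \<in> fin a b n1 n2 C"
proof -
  define S where "S = n1^2+n2^2"
  define u where "u = n1*y + n2*z"
  define w where "w = -n2*y + n1*z"
  define l3 where "l3 = u/(C*S)"
  define l1 where "l1 = (1 - l3 + w/(C*S))/2"
  define l2 where "l2 = (1 - l3 - w/(C*S))/2"
  have CS: "C*S > 0" using C s unfolding S_def by simp
  have Sp: "S > 0" "S \<noteq> 0" "C \<noteq> 0" using s C unfolding S_def by auto
  have l3: "0 \<le> l3" using u CS unfolding l3_def u_def by simp
  have "u + \<bar>w\<bar> \<le> C*S" using uw unfolding S_def u_def w_def by simp
  then have "(u + \<bar>w\<bar>)/(C*S) \<le> 1" using CS by (simp add: pos_divide_le_eq)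
  then have "u/(C*S) + \<bar>w\<bar>/(C*S) \<le> 1" by (simp add: add_divide_distrib)
  moreover have "\<bar>w/(C*S)\<bar> = \<bar>w\<bar>/(C*S)" using CS by (simp add: abs_divide del: abs_mult)
  ultimately have "l3 + \<bar>w/(C*S)\<bar> \<le> 1" unfolding l3_def by linarith
  then have l12: "0 \<le> l1" "0 \<le> l2" unfolding l1_def l2_def by (auto simp: abs_if split: if_splits)
  have sum: "l1 + l2 + l3 = 1" unfolding l1_def l2_def by (simp add: field_simps)
  have y: "y = l1 * (-(C*n2)) + l2 * (C*n2) + l3 * (C*n1)"
  proof -
    have "l1 * (-(C*n2)) + l2 * (C*n2) + l3 * (C*n1) = (-n2*w + n1*u)/S"
      unfolding l1_def l2_def l3_def using CS Sp by (simp add: field_simps)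
    also have "\<dots> = y" using Sp unfolding u_def w_def S_def by (simp add: field_simps power2_eq_square)
    finally show ?thesis by simp
  qed
  have z: "z = l1 * (C*n1) + l2 * (-(C*n1)) + l3 * (C*n2)"
  proof -
    have "l1 * (C*n1) + l2 * (-(C*n1)) + l3 * (C*n2) = (n1*w + n2*u)/S"
      unfolding l1_def l2_def l3_def using CS Sp by (simp add: field_simps)
    also have "\<dots> = z" using Sp unfolding u_def w_def S_def by (simp add: field_simps power2_eq_square)
    finally show ?thesis by simp
  qed
  have tri: "pt c y z \<in> fin a b n1 n2 C" if "c = a \<or> c = b" for c
  proof -
    have "pt c y z = l1 *\<^sub>R pt c (-(C*n2)) (C*n1) + l2 *\<^sub>R pt c (C*n2) (-(C*n1)) + l3 *\<^sub>R pt c (C*n1) (C*n2)"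
      using y z sum by (simp add: algebra_simps) (metis distrib_right mult_1 mult.commute)
    then have "pt c y z \<in> convex hull {pt c (-(C*n2)) (C*n1), pt c (C*n2) (-(C*n1)), pt c (C*n1) (C*n2)}"
      unfolding convex_hull_3 using l12 l3 sum by blast
    moreover have "convex hull {pt c (-(C*n2)) (C*n1), pt c (C*n2) (-(C*n1)), pt c (C*n1) (C*n2)} \<subseteq> fin a b n1 n2 C"
      unfolding fin_def using that by (intro hull_mono) auto
    ultimately show ?thesis by blast
  qed
  have ba: "b - a \<noteq> 0" using ab by simp
  have "((b-x)/(b-a))*a + ((x-a)/(b-a))*b = ((b-x)*a + (x-a)*b)/(b-a)"
    by (simp add: add_divide_distrib)
  also have "(b-x)*a + (x-a)*b = x*(b-a)" by (simp add: algebra_simps)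
  finally have e1: "((b-x)/(b-a))*a + ((x-a)/(b-a))*b = x" using ba by simp
  have s1: "(b-x)/(b-a) + (x-a)/(b-a) = 1"
  proof -
    have "(b-x)/(b-a) + (x-a)/(b-a) = ((b-x)+(x-a))/(b-a)" by (rule add_divide_distrib[symmetric])
    also have "\<dots> = 1" using ba by simp
    finally show ?thesis .
  qed
  have e2: "((b-x)/(b-a))*t + ((x-a)/(b-a))*t = t" for t
    by (metis s1 distrib_right mult_1)
  have "pt x y z = ((b-x)/(b-a)) *\<^sub>R pt a y z + ((x-a)/(b-a)) *\<^sub>R pt b y z"
    by (simp only: pt_scale pt_add e1 e2)
  also have "\<dots> \<in> fin a b n1 n2 C"
    unfolding fin_def
    apply (rule convexD[OF convex_convex_hull])
    using tri[unfolded fin_def] ab s1 by auto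
  finally show ?thesis .
qed

definition seg1 :: "real \<Rightarrow> (real^3) set" where "seg1 C = convex hull {pt 0 0 (-C), pt 0 0 C}"
definition seg2 :: "real \<Rightarrow> (real^3) set" where "seg2 C = convex hull {pt 1 (-C) 0, pt 1 C 0}"

lemma seg1_sub: "seg1 C \<subseteq> {v. v$1 = 0 \<and> v$2 = 0}"
proof -
  have "convex {v::real^3. v$1 = 0 \<and> v$2 = 0}"
    unfolding convex_def by auto
  then show ?thesis unfolding seg1_def by (intro hull_minimal) auto
qed

lemma seg2_sub: "seg2 C \<subseteq> {v. v$1 = 1 \<and> v$3 = 0}"
proof -
  have "convex {v::real^3. v$1 = 1 \<and> v$3 = 0}"
    unfolding convex_def by (auto simp: algebra_simps)
  then show ?thesis unfolding seg2_def by (intro hull_minimal) auto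
qed

lemma seg1_mem: assumes "\<bar>z\<bar> \<le> C" "C > 0" shows "pt 0 0 z \<in> seg1 C"
proof -
  have "pt 0 0 z = ((C - z)/(2*C)) *\<^sub>R pt 0 0 (-C) + ((C+z)/(2*C)) *\<^sub>R pt 0 0 C"
    using assms by (simp add: field_simps)
  moreover have "0 \<le> (C - z)/(2*C)" "0 \<le> (C+z)/(2*C)" "(C - z)/(2*C) + (C+z)/(2*C) = 1"
    using assms by (auto simp: field_simps abs_le_iff)
  ultimately show ?thesis unfolding seg1_def convex_hull_2 by blast
qed

lemma seg2_mem: assumes "\<bar>y\<bar> \<le> C" "C > 0" shows "pt 1 y 0 \<in> seg2 C"
proof -
  have "pt 1 y 0 = ((C - y)/(2*C)) *\<^sub>R pt 1 (-C) 0 + ((C+y)/(2*C)) *\<^sub>R pt 1 C 0"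
    using assms by (simp add: field_simps)
  moreover have "0 \<le> (C - y)/(2*C)" "0 \<le> (C+y)/(2*C)" "(C - y)/(2*C) + (C+y)/(2*C) = 1"
    using assms by (auto simp: field_simps abs_le_iff)
  ultimately show ?thesis unfolding seg2_def convex_hull_2 by blast
qed

lemma line_coord:
  assumes "d$1 \<noteq> 0" "v \<in> line_of p d"
  shows "v$2 = (p$2 - p$1*d$2/d$1) + v$1 * (d$2/d$1)" "v$3 = (p$3 - p$1*d$3/d$1) + v$1 * (d$3/d$1)"
proof -
  obtain t where t: "v = p + t *\<^sub>R d" using assms(2) unfolding line_of_def by blast
  have "v$1 = p$1 + t * d$1" using t by simp
  then have tt: "t = (v$1 - p$1)/d$1" using assms(1) by (simp add: field_simps)
  have v2: "v$2 = p$2 + t * d$2" "v$3 = p$3 + t * d$3" using t by simp_all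
  show "v$2 = (p$2 - p$1*d$2/d$1) + v$1 * (d$2/d$1)" unfolding v2 tt using assms(1) by (simp add: field_simps)
  show "v$3 = (p$3 - p$1*d$3/d$1) + v$1 * (d$3/d$1)" unfolding v2 tt using assms(1) by (simp add: field_simps)
qed

lemma affine_endpoint:
  fixes al be x a b :: real
  assumes "a \<le> x" "x \<le> b" "0 \<le> al + be*x"
  shows "0 \<le> al + be*a \<or> 0 \<le> al + be*b"
proof (cases "be \<ge> 0")
  case True
  then have "be*x \<le> be*b" using assms by (simp add: mult_left_mono)
  then show ?thesis using assms by auto
next
  case False
  then have "be*x \<le> be*a" using assms by (simp add: mult_left_mono_neg)
  then show ?thesis using assms by auto
qed

lemma fin_meet:
  assumes d: "d$1 \<noteq> 0" and m: "line_of p d \<inter> fin a b n1 n2 C \<noteq> {}" and ab: "a \<le> b" "C \<ge> 0"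
  shows "0 \<le> n1*((p$2 - p$1*d$2/d$1) + a*(d$2/d$1)) + n2*((p$3 - p$1*d$3/d$1) + a*(d$3/d$1))
     \<or> 0 \<le> n1*((p$2 - p$1*d$2/d$1) + b*(d$2/d$1)) + n2*((p$3 - p$1*d$3/d$1) + b*(d$3/d$1))"
proof -
  obtain v where v: "v \<in> line_of p d" "v \<in> fin a b n1 n2 C" using m by blast
  have h: "a \<le> v$1" "v$1 \<le> b" "0 \<le> n1 * v$2 + n2 * v$3" using fin_sub[OF ab] v(2) by auto
  let ?Y0 = "p$2 - p$1*d$2/d$1" and ?Z0 = "p$3 - p$1*d$3/d$1" and ?DY = "d$2/d$1" and ?DZ = "d$3/d$1"
  have "0 \<le> (n1*?Y0 + n2*?Z0) + (n1*?DY + n2*?DZ) * v$1"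
    using h(3) line_coord[OF d v(1)] by (simp add: algebra_simps)
  from affine_endpoint[OF h(1,2) this] show ?thesis by (simp add: algebra_simps)
qed

lemma pin_alg:
  fixes N :: nat and Y0 Z0 DY DZ :: real
  assumes N: "N \<ge> 1" and h1: "Y0 = 0" and h2: "Z0 + DZ = 0"
    and ha: "0 \<le> 0*(Y0 + 2*DY) + 1*(Z0 + 2*DZ) \<or> 0 \<le> 0*(Y0 + 3*DY) + 1*(Z0 + 3*DZ)"
    and hb: "0 \<le> 1*(Y0 + (1/3)*DY) + 1*(Z0 + (1/3)*DZ) \<or> 0 \<le> 1*(Y0 + (1/2)*DY) + 1*(Z0 + (1/2)*DZ)"
    and hc: "0 \<le> (-1)*(Y0 + (2*real N/(2*real N+1))*DY) + (2*real N)*(Z0 + (2*real N/(2*real N+1))*DZ)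
           \<or> 0 \<le> (-1)*(Y0 + 2*DY) + (2*real N)*(Z0 + 2*DZ)"
    and hk: "\<forall>k\<in>{1..N}. 0 \<le> (-1)*(Y0 + (-real k)*DY) + real k*(Z0 + (-real k)*DZ)
           \<or> 0 \<le> (-1)*(Y0 + real k*DY) + real k*(Z0 + real k*DZ)"
  shows "DY = 0 \<and> DZ = 0"
proof -
  have Z0: "Z0 = -DZ" using h2 by simp
  have DZ: "DZ \<ge> 0" using ha unfolding Z0 by auto
  have DYZ: "DY \<ge> DZ" using hb DZ unfolding Z0 h1 by auto
  define a where "a = 2*real N/(2*real N+1)"
  have apos: "a > 0" unfolding a_def using N by simp
  have a1: "2*real N*(a-1) = -a" unfolding a_def by (simp add: field_simps)
  have "0 \<le> -a*(DY + DZ) \<or> DY \<le> real N * DZ"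
  proof -
    have e0: "(-1)*(Y0 + a*DY) + (2*real N)*(Z0 + a*DZ) = -a*DY + (2*real N*(a-1))*DZ"
      unfolding Z0 h1 by (simp add: algebra_simps)
    have "(-1)*(Y0 + a*DY) + (2*real N)*(Z0 + a*DZ) = -a*(DY + DZ)"
      unfolding e0 a1 by (simp add: algebra_simps)
    then show ?thesis using hc unfolding a_def[symmetric] Z0 h1 by auto
  qed
  then have hc': "DY + DZ \<le> 0 \<or> DY \<le> real N * DZ"
    using apos by (auto simp: mult_le_0_iff zero_le_mult_iff)
  show ?thesis
  proof (cases "DZ = 0")
    case True
    then show ?thesis using hc' DYZ by auto
  next
    case False
    then have DZp: "DZ > 0" using DZ by simp
    have up: "DY \<le> real N * DZ" using hc' DYZ DZp by auto
    define q where "q = DY / DZ"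
    have q1: "1 \<le> q" unfolding q_def using DYZ DZp by simp
    have qN: "q \<le> real N" unfolding q_def using up DZp by (simp add: divide_le_eq)
    define k where "k = nat \<lfloor>q\<rfloor>"
    have fl: "real k \<le> q" "q < real k + 1" "1 \<le> k" "k \<le> N"
    proof -
      have "\<lfloor>q\<rfloor> \<ge> 1" using q1 by simp
      then have rk: "real k = of_int \<lfloor>q\<rfloor>" unfolding k_def by simp
      show "real k \<le> q" "q < real k + 1" unfolding rk by (simp_all add: of_int_floor_le)
      show "1 \<le> k" using \<open>\<lfloor>q\<rfloor> \<ge> 1\<close> unfolding k_def by linarith
      have "real k \<le> real N" using \<open>real k \<le> q\<close> qN by linarith
      then show "k \<le> N" by simp
    qed
    have "k \<in> {1..N}" using fl by simp
    with hk have hkk: "0 \<le> (-1)*(Y0 + (-real k)*DY) + real k*(Z0 + (-real k)*DZ)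
           \<or> 0 \<le> (-1)*(Y0 + real k*DY) + real k*(Z0 + real k*DZ)" by blast
    have DYq: "DY = q * DZ" unfolding q_def using DZp by simp
    have kp: "real k > 0" using fl by simp
    have e1: "(-1)*(Y0 + (-real k)*DY) + real k*(Z0 + (-real k)*DZ) = real k * DZ * (q - (real k + 1))"
      unfolding Z0 h1 DYq by (simp add: algebra_simps)
    have e2: "(-1)*(Y0 + real k*DY) + real k*(Z0 + real k*DZ) = real k * DZ * ((real k - 1) - q)"
      unfolding Z0 h1 DYq by (simp add: algebra_simps)
    have "real k * DZ > 0" using kp DZp by simp
    then have "real k * DZ * (q - (real k + 1)) < 0" "real k * DZ * ((real k - 1) - q) < 0"
      using fl by (simp_all add: mult_pos_neg)
    then show ?thesis using hkk e1 e2 by linarith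
  qed
qed

definition wl :: "real \<Rightarrow> real \<Rightarrow> real \<Rightarrow> real \<Rightarrow> real \<Rightarrow> (real^3) set" where
  "wl e Y0 DY Z0 DZ = line_of (pt 0 (e*Y0) (e*Z0)) (pt 1 (e*DY) (e*DZ))"

lemma on_wl: "pt x (e*(Y0+x*DY)) (e*(Z0+x*DZ)) \<in> wl e Y0 DY Z0 DZ"
proof -
  have "pt x (e*(Y0+x*DY)) (e*(Z0+x*DZ)) = pt 0 (e*Y0) (e*Z0) + x *\<^sub>R pt 1 (e*DY) (e*DZ)"
    by (simp add: algebra_simps)
  then show ?thesis unfolding wl_def line_of_def by blast
qed

lemma wl_line: "is_line (wl e Y0 DY Z0 DZ)"
  unfolding is_line_def wl_def by (rule exI[of _ "pt 0 (e*Y0) (e*Z0)"], rule exI[of _ "pt 1 (e*DY) (e*DZ)"]) simp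

lemma wl_meets_fin:
  assumes "a < b" "a \<le> x" "x \<le> b" "C > 0" "n1^2+n2^2 > 0" "0 < e" "e \<le> 1"
    "0 \<le> n1*(Y0+x*DY) + n2*(Z0+x*DZ)"
    "n1*(Y0+x*DY) + n2*(Z0+x*DZ) + \<bar>-n2*(Y0+x*DY) + n1*(Z0+x*DZ)\<bar> \<le> C*(n1^2+n2^2)"
  shows "wl e Y0 DY Z0 DZ \<inter> fin a b n1 n2 C \<noteq> {}"
proof -
  let ?y = "Y0+x*DY" and ?z = "Z0+x*DZ"
  have e1: "n1*(e*?y) + n2*(e*?z) = e*(n1*?y + n2*?z)" by (simp add: algebra_simps)
  have e2: "-n2*(e*?y) + n1*(e*?z) = e*(-n2*?y + n1*?z)" by (simp add: algebra_simps)
  have u: "0 \<le> n1*(e*?y) + n2*(e*?z)" unfolding e1 using assms(6,8) by simp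
  have w: "n1*(e*?y) + n2*(e*?z) + \<bar>-n2*(e*?y) + n1*(e*?z)\<bar> = e*(n1*?y + n2*?z + \<bar>-n2*?y + n1*?z\<bar>)"
    unfolding e1 e2 abs_mult using assms(6) by (simp add: algebra_simps)
  have "e*(n1*?y + n2*?z + \<bar>-n2*?y + n1*?z\<bar>) \<le> 1*(n1*?y + n2*?z + \<bar>-n2*?y + n1*?z\<bar>)"
    using assms(6,7,8) by (intro mult_right_mono) auto
  then have "e*(n1*?y + n2*?z + \<bar>-n2*?y + n1*?z\<bar>) \<le> n1*?y + n2*?z + \<bar>-n2*?y + n1*?z\<bar>"
    by (simp only: mult_1)
  then have "n1*(e*?y) + n2*(e*?z) + \<bar>-n2*(e*?y) + n1*(e*?z)\<bar> \<le> C*(n1^2+n2^2)"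
    using w assms(9) by (rule_tac order_trans) simp_all
  from fin_mem[OF assms(1-5) u this] on_wl[of x e Y0 DY Z0 DZ] show ?thesis by blast
qed

lemma wl_meets_seg1:
  assumes "\<bar>e*Z0\<bar> \<le> C" "C > 0"
  shows "wl e 0 DY Z0 DZ \<inter> seg1 C \<noteq> {}"
proof -
  have "pt 0 0 (e*Z0) \<in> wl e 0 DY Z0 DZ" using on_wl[of 0 e 0 DY Z0 DZ] by simp
  then show ?thesis using seg1_mem[OF assms] by blast
qed

lemma wl_meets_seg2:
  assumes "Z0 + DZ = 0" "\<bar>e*(Y0+DY)\<bar> \<le> C" "C > 0"
  shows "wl e Y0 DY Z0 DZ \<inter> seg2 C \<noteq> {}"
proof -
  have "pt 1 (e*(Y0+DY)) 0 \<in> wl e Y0 DY Z0 DZ" using on_wl[of 1 e Y0 DY Z0 DZ] assms(1) by simp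
  then show ?thesis using seg2_mem[OF assms(2,3)] by blast
qed

lemma L0_char: "v \<in> L0 \<Longrightarrow> v$2 = 0 \<and> v$3 = 0"
  unfolding L0_def line_of_def by auto

lemma wl_ne:
  assumes "e > 0" "Y0+x*DY \<noteq> 0 \<or> Z0+x*DZ \<noteq> 0"
  shows "wl e Y0 DY Z0 DZ \<noteq> L0"
proof
  assume eq: "wl e Y0 DY Z0 DZ = L0"
  have "pt x (e*(Y0+x*DY)) (e*(Z0+x*DZ)) \<in> L0" using on_wl[of x e Y0 DY Z0 DZ] eq by simp
  then have "e*(Y0+x*DY) = 0" "e*(Z0+x*DZ) = 0" using L0_char by force+
  then show False using assms by simp
qed

definition Cn :: "nat \<Rightarrow> real" where "Cn N = 2 * real N + 3"
definition Fa where "Fa N = fin 2 3 0 1 (Cn N)"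
definition Fb where "Fb N = fin (1/3) (1/2) 1 1 (Cn N)"
definition Fc where "Fc N = fin (2*real N/(2*real N+1)) 2 (-1) (2*real N) (Cn N)"
definition chain where "chain N k = fin (-real k) (real k) (-1) (real k) (Cn N)"
definition FF :: "nat \<Rightarrow> (real^3) set set" where
  "FF N = {seg1 (Cn N), seg2 (Cn N), Fa N, Fb N, Fc N} \<union> chain N ` {1..N}"

lemma Cn_pos: "Cn N > 0" unfolding Cn_def by simp

lemma L0_eq:
  assumes "d$1 \<noteq> 0" "p$2 = 0" "p$3 = 0" "d$2 = 0" "d$3 = 0"
  shows "line_of p d = L0"
proof -
  have "p + t *\<^sub>R d = 0 + ((p$1 + t*d$1)) *\<^sub>R pt 1 0 0" for t
    using assms by (simp add: vec3_eq_iff)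
  moreover have "0 + s *\<^sub>R pt 1 0 0 = p + ((s - p$1)/d$1) *\<^sub>R d" for s
    using assms by (simp add: vec3_eq_iff field_simps)
  ultimately show ?thesis unfolding L0_def line_of_def by blast
qed

lemma pinning:
  assumes N: "N \<ge> 1" and M: "M \<in> VV" and T: "line_transversal M (FF N)"
  shows "M = L0"
proof -
  obtain p d where d: "d$1 \<noteq> 0" and Mpd: "M = line_of p d" using M unfolding VV_def by blast
  define Y0 where "Y0 = p$2 - p$1*d$2/d$1"
  define Z0 where "Z0 = p$3 - p$1*d$3/d$1"
  define DY where "DY = d$2/d$1"
  define DZ where "DZ = d$3/d$1"
  have meet: "M \<inter> P \<noteq> {}" if "P \<in> FF N" for P using T that unfolding line_transversal_def by blast
  have C: "Cn N \<ge> 0" using Cn_pos less_imp_le by blast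
  obtain v where v: "v \<in> M" "v \<in> seg1 (Cn N)" using meet[of "seg1 (Cn N)"] unfolding FF_def by blast
  have "v$1 = 0" "v$2 = 0" using seg1_sub v(2) by auto
  then have h1: "Y0 = 0" using line_coord(1)[OF d v(1)[unfolded Mpd]] unfolding Y0_def by simp
  obtain v' where v': "v' \<in> M" "v' \<in> seg2 (Cn N)" using meet[of "seg2 (Cn N)"] unfolding FF_def by blast
  have "v'$1 = 1" "v'$3 = 0" using seg2_sub v'(2) by auto
  then have h2: "Z0 + DZ = 0" using line_coord(2)[OF d v'(1)[unfolded Mpd]] unfolding Z0_def DZ_def by simp
  have ha: "0 \<le> 0*(Y0 + 2*DY) + 1*(Z0 + 2*DZ) \<or> 0 \<le> 0*(Y0 + 3*DY) + 1*(Z0 + 3*DZ)"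
  proof -
    have "line_of p d \<inter> fin 2 3 0 1 (Cn N) \<noteq> {}" using meet[of "Fa N"] Mpd unfolding Fa_def FF_def by simp
    from fin_meet[OF d this _ C] show ?thesis unfolding Y0_def Z0_def DY_def DZ_def by simp
  qed
  have hb: "0 \<le> 1*(Y0 + (1/3)*DY) + 1*(Z0 + (1/3)*DZ) \<or> 0 \<le> 1*(Y0 + (1/2)*DY) + 1*(Z0 + (1/2)*DZ)"
  proof -
    have "line_of p d \<inter> fin (1/3) (1/2) 1 1 (Cn N) \<noteq> {}" using meet[of "Fb N"] Mpd unfolding Fb_def FF_def by simp
    from fin_meet[OF d this _ C] show ?thesis unfolding Y0_def Z0_def DY_def DZ_def by simp
  qed
  have le: "2*real N/(2*real N+1) \<le> 2" by (simp add: field_simps)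
  have hc: "0 \<le> (-1)*(Y0 + (2*real N/(2*real N+1))*DY) + (2*real N)*(Z0 + (2*real N/(2*real N+1))*DZ)
           \<or> 0 \<le> (-1)*(Y0 + 2*DY) + (2*real N)*(Z0 + 2*DZ)"
  proof -
    have "line_of p d \<inter> fin (2*real N/(2*real N+1)) 2 (-1) (2*real N) (Cn N) \<noteq> {}" using meet[of "Fc N"] Mpd unfolding Fc_def FF_def by simp
    from fin_meet[OF d this le C] show ?thesis unfolding Y0_def Z0_def DY_def DZ_def by simp
  qed
  have hk: "\<forall>k\<in>{1..N}. 0 \<le> (-1)*(Y0 + (-real k)*DY) + real k*(Z0 + (-real k)*DZ)
           \<or> 0 \<le> (-1)*(Y0 + real k*DY) + real k*(Z0 + real k*DZ)"
  proof
    fix k assume k: "k \<in> {1..N}"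
    have le: "-real k \<le> real k" by simp
    show "0 \<le> (-1)*(Y0 + (-real k)*DY) + real k*(Z0 + (-real k)*DZ)
           \<or> 0 \<le> (-1)*(Y0 + real k*DY) + real k*(Z0 + real k*DZ)"
    proof -
      have "line_of p d \<inter> fin (-real k) (real k) (-1) (real k) (Cn N) \<noteq> {}" using meet[of "chain N k"] Mpd k unfolding chain_def FF_def by simp
      from fin_meet[OF d this le C] show ?thesis unfolding Y0_def Z0_def DY_def DZ_def by simp
    qed
  qed
  from pin_alg[OF N h1 h2 ha hb hc hk] have "DY = 0" "DZ = 0" by auto
  then have "d$2 = 0" "d$3 = 0" using d unfolding DY_def DZ_def by auto
  moreover have "p$2 = 0" "p$3 = 0" using h1 h2 \<open>DZ = 0\<close> \<open>d$2 = 0\<close> \<open>d$3 = 0\<close> unfolding Y0_def Z0_def by auto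
  ultimately show ?thesis using L0_eq d Mpd by simp
qed

lemma ch_gt:
  fixes j k N :: real
  assumes "1 \<le> k" "k + 1 \<le> j" "j \<le> N"
  shows "0 \<le> - 1 * (0 + j * k) + j * (- 1 + j * 1)"
    "- 1 * (0 + j * k) + j * (- 1 + j * 1) + \<bar>- j * (0 + j * k) + - 1 * (- 1 + j * 1)\<bar> \<le> (2 * N + 3) * ((- 1)\<^sup>2 + j\<^sup>2)"
proof -
  have a: "- 1 * (0 + j * k) + j * (- 1 + j * 1) = j * (j - 1 - k)" by (simp add: algebra_simps)
  show "0 \<le> - 1 * (0 + j * k) + j * (- 1 + j * 1)" unfolding a using assms by simp
  have b: "- j * (0 + j * k) + - 1 * (- 1 + j * 1) = - ((j*j)*k + j - 1)" by (simp add: algebra_simps)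
  have jj: "0 \<le> j*j" by simp
  have c: "0 \<le> (j*j)*k" using assms by simp
  have d: "(j*j)*k \<le> (j*j)*N" using assms by (intro mult_left_mono) auto
  have f: "j * (j - 1 - k) = j*j - j - j*k" by (simp add: algebra_simps)
  have g: "0 \<le> j*k" using assms by simp
  have e: "(2 * N + 3) * ((- 1)\<^sup>2 + j\<^sup>2) = 2*N + 3 + 2*((j*j)*N) + 3*(j*j)" by (simp add: power2_eq_square algebra_simps)
  have "0 \<le> (j*j)*k + j - 1" using c assms by linarith
  then have "\<bar>- ((j*j)*k + j - 1)\<bar> = (j*j)*k + j - 1" by (simp only: abs_minus_cancel abs_of_nonneg)
  then show "- 1 * (0 + j * k) + j * (- 1 + j * 1) + \<bar>- j * (0 + j * k) + - 1 * (- 1 + j * 1)\<bar> \<le> (2 * N + 3) * ((- 1)\<^sup>2 + j\<^sup>2)"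
    unfolding a b e f using c d g jj assms by linarith
qed

lemma ch_lt:
  fixes j k N :: real
  assumes "1 \<le> j" "j + 1 \<le> k" "k \<le> N"
  shows "0 \<le> - 1 * (0 + - j * k) + j * (- 1 + - j * 1)"
    "- 1 * (0 + - j * k) + j * (- 1 + - j * 1) + \<bar>- j * (0 + - j * k) + - 1 * (- 1 + - j * 1)\<bar> \<le> (2 * N + 3) * ((- 1)\<^sup>2 + j\<^sup>2)"
proof -
  have a: "- 1 * (0 + - j * k) + j * (- 1 + - j * 1) = j * (k - 1 - j)" by (simp add: algebra_simps)
  show "0 \<le> - 1 * (0 + - j * k) + j * (- 1 + - j * 1)" unfolding a using assms by simp
  have b: "- j * (0 + - j * k) + - 1 * (- 1 + - j * 1) = (j*j)*k + j + 1" by (simp add: algebra_simps)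
  have jj: "0 \<le> j*j" by simp
  have c: "0 \<le> (j*j)*k" using assms by simp
  have d: "(j*j)*k \<le> (j*j)*N" using assms by (intro mult_left_mono) auto
  have d2: "j*k \<le> (j*j)*k" using assms by (intro mult_right_mono) (auto simp: mult_le_cancel_left1)
  have f: "j * (k - 1 - j) = j*k - j - j*j" by (simp add: algebra_simps)
  have e: "(2 * N + 3) * ((- 1)\<^sup>2 + j\<^sup>2) = 2*N + 3 + 2*((j*j)*N) + 3*(j*j)" by (simp add: power2_eq_square algebra_simps)
  have "\<bar>(j*j)*k + j + 1\<bar> = (j*j)*k + j + 1" using c assms by simp
  then show "- 1 * (0 + - j * k) + j * (- 1 + - j * 1) + \<bar>- j * (0 + - j * k) + - 1 * (- 1 + - j * 1)\<bar> \<le> (2 * N + 3) * ((- 1)\<^sup>2 + j\<^sup>2)"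
    unfolding a b e f using c d d2 jj assms by linarith
qed

lemma fc_k:
  fixes k N :: real
  assumes "1 \<le> k" "k \<le> N"
  shows "- 1 * (0 + 2 * k) + 2 * N * (- 1 + 2 * 1) + \<bar>- (2 * N) * (0 + 2 * k) + - 1 * (- 1 + 2 * 1)\<bar>
      \<le> (2 * N + 3) * ((- 1)\<^sup>2 + (2 * N)\<^sup>2)"
proof -
  have b: "- (2 * N) * (0 + 2 * k) + - 1 * (- 1 + 2 * 1) = - (4*(N*k) + 1)" by (simp add: algebra_simps)
  have c: "0 \<le> N*k" using assms by simp
  have d: "N*k \<le> N*N" using assms by (intro mult_left_mono) auto
  have n3: "0 \<le> N*(N*N)" using assms by simp
  have e: "(2 * N + 3) * ((- 1)\<^sup>2 + (2 * N)\<^sup>2) = 2*N + 3 + 8*(N*(N*N)) + 12*(N*N)" by (simp add: power2_eq_square algebra_simps)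
  have "\<bar>- (4*(N*k) + 1)\<bar> = 4*(N*k) + 1" using c by simp
  moreover have a: "- 1 * (0 + 2 * k) + 2 * N * (- 1 + 2 * 1) = 2*N - 2*k" by simp
  ultimately show ?thesis unfolding a b e using c d n3 assms by linarith
qed


lemma Wk_meets:
  fixes N k :: nat and e :: real
  assumes N: "1 \<le> k" "k \<le> N" and e: "0 < e" "e \<le> 1"
  shows "wl e 0 (real k) (-1) 1 \<inter> seg1 (Cn N) \<noteq> {}"
    "wl e 0 (real k) (-1) 1 \<inter> seg2 (Cn N) \<noteq> {}"
    "wl e 0 (real k) (-1) 1 \<inter> Fa N \<noteq> {}"
    "wl e 0 (real k) (-1) 1 \<inter> Fb N \<noteq> {}"
    "wl e 0 (real k) (-1) 1 \<inter> Fc N \<noteq> {}"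
    "j \<in> {1..N} \<Longrightarrow> j \<noteq> k \<Longrightarrow> wl e 0 (real k) (-1) 1 \<inter> chain N j \<noteq> {}"
proof -
  have kN: "real k \<le> real N" "1 \<le> real k" using N by auto
  show "wl e 0 (real k) (-1) 1 \<inter> seg1 (Cn N) \<noteq> {}"
    by (rule wl_meets_seg1) (use e in \<open>auto simp: Cn_def\<close>)
  show "wl e 0 (real k) (-1) 1 \<inter> seg2 (Cn N) \<noteq> {}"
  proof (rule wl_meets_seg2)
    have "e * real k \<le> 1 * real k" using e by (intro mult_right_mono) auto
    moreover have "\<bar>e * (0 + real k)\<bar> = e * real k" using e kN by simp
    ultimately show "\<bar>e * (0 + real k)\<bar> \<le> Cn N" using e kN unfolding Cn_def by linarith
  qed (auto simp: Cn_pos)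
  show "wl e 0 (real k) (-1) 1 \<inter> Fa N \<noteq> {}"
    unfolding Fa_def by (rule wl_meets_fin[where x=2]) (use e kN in \<open>auto simp: Cn_def\<close>)
  show "wl e 0 (real k) (-1) 1 \<inter> Fb N \<noteq> {}"
    unfolding Fb_def by (rule wl_meets_fin[where x="1/2"]) (use e kN in \<open>auto simp: Cn_def\<close>)
  show "wl e 0 (real k) (-1) 1 \<inter> Fc N \<noteq> {}"
    unfolding Fc_def
  proof (rule wl_meets_fin[where x=2])
    show "(- 1) * (0 + 2 * real k) + 2 * real N * (- 1 + 2 * 1) + \<bar>- (2 * real N) * (0 + 2 * real k) + - 1 * (- 1 + 2 * 1)\<bar>
      \<le> Cn N * ((- 1)\<^sup>2 + (2 * real N)\<^sup>2)"
      using fc_k[of "real k" "real N"] kN unfolding Cn_def by simp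
  qed (use e kN in \<open>auto simp: field_simps Cn_pos add_pos_nonneg\<close>)
  assume j: "j \<in> {1..N}" "j \<noteq> k"
  have jN: "real j \<le> real N" "1 \<le> real j" using j by auto
  have sq: "0 < 1 + (real j)^2" by (simp add: add_pos_nonneg)
  show "wl e 0 (real k) (-1) 1 \<inter> chain N j \<noteq> {}"
  proof (cases "k < j")
    case True
    then have jk: "real k + 1 \<le> real j" by linarith
    show ?thesis unfolding chain_def
      by (rule wl_meets_fin[where x="real j"])
        (use ch_gt[of "real k" "real j" "real N"] e kN jN jk sq in \<open>auto simp: Cn_def\<close>)
  next
    case False
    then have jk: "real j + 1 \<le> real k" using j by linarith
    show ?thesis unfolding chain_def
      by (rule wl_meets_fin[where x="- real j"])
        (use ch_lt[of "real j" "real k" "real N"] e kN jN jk sq in \<open>auto simp: Cn_def\<close>)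
  qed
qed

lemma sq_bound1: fixes j N :: real assumes "1 \<le> j" "j \<le> N"
  shows "j + j^2 \<le> (2*N+3)*(1+j^2)" "j^2 + 2*j + 1 \<le> (2*N+3)*(1+j^2)"
proof -
  have "j \<le> j^2" using assms by (simp add: power2_eq_square)
  moreover have "(2*N+3)*(1+j^2) = 2*N + 3 + 2*(N*j^2) + 3*j^2" by (simp add: algebra_simps)
  moreover have "0 \<le> N*j^2" using assms by simp
  ultimately show "j + j^2 \<le> (2*N+3)*(1+j^2)" "j^2 + 2*j + 1 \<le> (2*N+3)*(1+j^2)" using assms by linarith+
qed

lemma sq_bound2: fixes N :: real assumes "1 \<le> N"
  shows "4*N + 2 \<le> (2*N+3)*(1+(2*N)^2)" "1 \<le> (2*N+3)*(1+(2*N)^2)"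
proof -
  have "N \<le> N^2" using assms by (simp add: power2_eq_square)
  moreover have "(2*N+3)*(1+(2*N)^2) = 2*N + 3 + 8*(N*N^2) + 12*N^2" by (simp add: algebra_simps power2_eq_square)
  moreover have "0 \<le> N*N^2" using assms by simp
  ultimately show "4*N + 2 \<le> (2*N+3)*(1+(2*N)^2)" "1 \<le> (2*N+3)*(1+(2*N)^2)" using assms by linarith+
qed

lemma W_S1_meets:
  assumes N: "1 \<le> N" and e: "0 < e" "e \<le> 1"
  shows "wl e 1 (-1) 0 0 \<inter> seg2 (Cn N) \<noteq> {}"
    "wl e 1 (-1) 0 0 \<inter> Fa N \<noteq> {}"
    "wl e 1 (-1) 0 0 \<inter> Fb N \<noteq> {}"
    "wl e 1 (-1) 0 0 \<inter> Fc N \<noteq> {}"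
    "j \<in> {1..N} \<Longrightarrow> wl e 1 (-1) 0 0 \<inter> chain N j \<noteq> {}"
proof -
  have C: "Cn N \<ge> 3" unfolding Cn_def by simp
  show "wl e 1 (-1) 0 0 \<inter> seg2 (Cn N) \<noteq> {}" by (rule wl_meets_seg2) (use C in auto)
  show "wl e 1 (-1) 0 0 \<inter> Fa N \<noteq> {}" unfolding Fa_def
    by (rule wl_meets_fin[where x=2]) (use C e in auto)
  show "wl e 1 (-1) 0 0 \<inter> Fb N \<noteq> {}" unfolding Fb_def
    by (rule wl_meets_fin[where x="1/2"]) (use C e in auto)
  show "wl e 1 (-1) 0 0 \<inter> Fc N \<noteq> {}" unfolding Fc_def
    by (rule wl_meets_fin[where x=1]) (use C e in \<open>auto simp: field_simps add_pos_nonneg\<close>)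
  assume j: "j \<in> {1..N}"
  show "wl e 1 (-1) 0 0 \<inter> chain N j \<noteq> {}" unfolding chain_def
    by (rule wl_meets_fin[where x=1]) (use C e j in \<open>auto simp: add_pos_nonneg\<close>)
qed

lemma W_S2_meets:
  assumes N: "1 \<le> N" and e: "0 < e" "e \<le> 1"
  shows "wl e 0 0 0 1 \<inter> seg1 (Cn N) \<noteq> {}"
    "wl e 0 0 0 1 \<inter> Fa N \<noteq> {}"
    "wl e 0 0 0 1 \<inter> Fb N \<noteq> {}"
    "wl e 0 0 0 1 \<inter> Fc N \<noteq> {}"
    "j \<in> {1..N} \<Longrightarrow> wl e 0 0 0 1 \<inter> chain N j \<noteq> {}"
proof -
  have C: "Cn N \<ge> 3" unfolding Cn_def by simp
  show "wl e 0 0 0 1 \<inter> seg1 (Cn N) \<noteq> {}" by (rule wl_meets_seg1) (use C in auto)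
  show "wl e 0 0 0 1 \<inter> Fa N \<noteq> {}" unfolding Fa_def
    by (rule wl_meets_fin[where x=2]) (use C e in auto)
  show "wl e 0 0 0 1 \<inter> Fb N \<noteq> {}" unfolding Fb_def
    by (rule wl_meets_fin[where x="1/2"]) (use C e in auto)
  show "wl e 0 0 0 1 \<inter> Fc N \<noteq> {}" unfolding Fc_def
    by (rule wl_meets_fin[where x=2]) (use C e sq_bound2[of "real N"] N in \<open>auto simp: field_simps add_pos_nonneg Cn_def\<close>)
  assume j: "j \<in> {1..N}"
  show "wl e 0 0 0 1 \<inter> chain N j \<noteq> {}" unfolding chain_def
    by (rule wl_meets_fin[where x=0]) (use C e j in \<open>auto simp: add_pos_nonneg\<close>)
qed

lemma W_Sa_meets:
  assumes N: "1 \<le> N" and e: "0 < e" "e \<le> 1"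
  shows "wl e 0 0 1 (-1) \<inter> seg1 (Cn N) \<noteq> {}"
    "wl e 0 0 1 (-1) \<inter> seg2 (Cn N) \<noteq> {}"
    "wl e 0 0 1 (-1) \<inter> Fb N \<noteq> {}"
    "wl e 0 0 1 (-1) \<inter> Fc N \<noteq> {}"
    "j \<in> {1..N} \<Longrightarrow> wl e 0 0 1 (-1) \<inter> chain N j \<noteq> {}"
proof -
  have C: "Cn N \<ge> 3" unfolding Cn_def by simp
  show "wl e 0 0 1 (-1) \<inter> seg1 (Cn N) \<noteq> {}" by (rule wl_meets_seg1) (use C e in auto)
  show "wl e 0 0 1 (-1) \<inter> seg2 (Cn N) \<noteq> {}" by (rule wl_meets_seg2) (use C e in auto)
  show "wl e 0 0 1 (-1) \<inter> Fb N \<noteq> {}" unfolding Fb_def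
    by (rule wl_meets_fin[where x="1/2"]) (use C e in auto)
  define a where "a = 2*real N/(2*real N+1)"
  have a: "0 < a" "a < 1" "1 - a = 1/(2*real N+1)" using N unfolding a_def by (auto simp: field_simps)
  have u: "- 1 * (0 + a * 0) + 2 * real N * (1 + a * - 1) = a" using a(3) unfolding a_def by (simp add: field_simps)
  have w: "- 1 * (0 + a * 0) + 2 * real N * (1 + a * - 1) + \<bar>- (2 * real N) * (0 + a * 0) + - 1 * (1 + a * - 1)\<bar> = 1"
    using a u by simp
  show "wl e 0 0 1 (-1) \<inter> Fc N \<noteq> {}" unfolding Fc_def a_def[symmetric]
    by (rule wl_meets_fin[where x=a]) (use C e a u w sq_bound2[of "real N"] N in \<open>auto simp: add_pos_nonneg Cn_def\<close>)
  assume j: "j \<in> {1..N}"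
  show "wl e 0 0 1 (-1) \<inter> chain N j \<noteq> {}" unfolding chain_def
    by (rule wl_meets_fin[where x="- real j"]) (use C e j sq_bound1[of "real j" "real N"] in \<open>auto simp: add_pos_nonneg Cn_def power2_eq_square algebra_simps\<close>)
qed

lemma W_Sb_meets:
  assumes N: "1 \<le> N" and e: "0 < e" "e \<le> 1"
  shows "wl e 0 (-1) 0 0 \<inter> seg1 (Cn N) \<noteq> {}"
    "wl e 0 (-1) 0 0 \<inter> seg2 (Cn N) \<noteq> {}"
    "wl e 0 (-1) 0 0 \<inter> Fa N \<noteq> {}"
    "wl e 0 (-1) 0 0 \<inter> Fc N \<noteq> {}"
    "j \<in> {1..N} \<Longrightarrow> wl e 0 (-1) 0 0 \<inter> chain N j \<noteq> {}"
proof -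
  have C: "Cn N \<ge> 3" unfolding Cn_def by simp
  show "wl e 0 (-1) 0 0 \<inter> seg1 (Cn N) \<noteq> {}" by (rule wl_meets_seg1) (use C e in auto)
  show "wl e 0 (-1) 0 0 \<inter> seg2 (Cn N) \<noteq> {}" by (rule wl_meets_seg2) (use C e in auto)
  show "wl e 0 (-1) 0 0 \<inter> Fa N \<noteq> {}" unfolding Fa_def
    by (rule wl_meets_fin[where x=2]) (use C e in auto)
  show "wl e 0 (-1) 0 0 \<inter> Fc N \<noteq> {}" unfolding Fc_def
    by (rule wl_meets_fin[where x=2]) (use C e sq_bound2[of "real N"] N in \<open>auto simp: field_simps add_pos_nonneg Cn_def\<close>)
  assume j: "j \<in> {1..N}"
  show "wl e 0 (-1) 0 0 \<inter> chain N j \<noteq> {}" unfolding chain_def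
    by (rule wl_meets_fin[where x="real j"]) (use C e j sq_bound1[of "real j" "real N"] in \<open>auto simp: add_pos_nonneg Cn_def power2_eq_square\<close>)
qed

lemma W_Sc_meets:
  assumes N: "1 \<le> N" and e: "0 < e" "e \<le> 1"
  shows "wl e 0 1 0 0 \<inter> seg1 (Cn N) \<noteq> {}"
    "wl e 0 1 0 0 \<inter> seg2 (Cn N) \<noteq> {}"
    "wl e 0 1 0 0 \<inter> Fa N \<noteq> {}"
    "wl e 0 1 0 0 \<inter> Fb N \<noteq> {}"
    "j \<in> {1..N} \<Longrightarrow> wl e 0 1 0 0 \<inter> chain N j \<noteq> {}"
proof -
  have C: "Cn N \<ge> 3" unfolding Cn_def by simp
  show "wl e 0 1 0 0 \<inter> seg1 (Cn N) \<noteq> {}" by (rule wl_meets_seg1) (use C e in auto)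
  show "wl e 0 1 0 0 \<inter> seg2 (Cn N) \<noteq> {}" by (rule wl_meets_seg2) (use C e in auto)
  show "wl e 0 1 0 0 \<inter> Fa N \<noteq> {}" unfolding Fa_def
    by (rule wl_meets_fin[where x=2]) (use C e in auto)
  show "wl e 0 1 0 0 \<inter> Fb N \<noteq> {}" unfolding Fb_def
    by (rule wl_meets_fin[where x="1/2"]) (use C e in auto)
  assume j: "j \<in> {1..N}"
  show "wl e 0 1 0 0 \<inter> chain N j \<noteq> {}" unfolding chain_def
    by (rule wl_meets_fin[where x="- real j"]) (use C e j sq_bound1[of "real j" "real N"] in \<open>auto simp: add_pos_nonneg Cn_def power2_eq_square\<close>)
qed

lemma wit:
  assumes V: "open_lines V" "L0 \<in> V"
    and H: "\<And>e. 0 < e \<Longrightarrow> e \<le> 1 \<Longrightarrow> wl e Y0 DY Z0 DZ \<noteq> L0 \<and> (\<forall>Q\<in>S. wl e Y0 DY Z0 DZ \<inter> Q \<noteq> {})"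
  shows "\<exists>M\<in>V. M \<noteq> L0 \<and> line_transversal M S"
proof -
  obtain e where e: "e > 0" "e \<le> 1" "wl e Y0 DY Z0 DZ \<in> V"
    using witness_in_V[OF V, of Y0 Z0 DY DZ] unfolding wl_def by blast
  then show ?thesis using H[OF e(1,2)] wl_line unfolding line_transversal_def by blast
qed

lemma FF_cases:
  assumes "Q \<in> FF N"
  obtains "Q = seg1 (Cn N)" | "Q = seg2 (Cn N)" | "Q = Fa N" | "Q = Fb N" | "Q = Fc N"
    | j where "j \<in> {1..N}" "Q = chain N j"
  using assms unfolding FF_def by blast

lemma remove_not_pins:
  assumes N: "N \<ge> 1" and P: "P \<in> FF N" and V: "open_lines V" "L0 \<in> V"
  shows "\<exists>M\<in>V. M \<noteq> L0 \<and> line_transversal M (FF N - {P})"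
  using P
proof (cases rule: FF_cases)
  case 1
  show ?thesis
  proof (rule wit[OF V, of 1 "-1" 0 0])
    fix e :: real assume e: "0 < e" "e \<le> 1"
    have "wl e 1 (-1) 0 0 \<noteq> L0" by (rule wl_ne[where x=0]) (use e in auto)
    moreover have "\<forall>Q\<in>FF N - {P}. wl e 1 (-1) 0 0 \<inter> Q \<noteq> {}"
    proof
      fix Q assume Q: "Q \<in> FF N - {P}"
      then have "Q \<in> FF N" "Q \<noteq> P" by auto
      then show "wl e 1 (-1) 0 0 \<inter> Q \<noteq> {}"
        by (cases rule: FF_cases) (use W_S1_meets[OF N e] 1 in auto)
    qed
    ultimately show "wl e 1 (-1) 0 0 \<noteq> L0 \<and> (\<forall>Q\<in>FF N - {P}. wl e 1 (-1) 0 0 \<inter> Q \<noteq> {})" by blast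
  qed
next
  case 2
  show ?thesis
  proof (rule wit[OF V, of 0 0 0 1])
    fix e :: real assume e: "0 < e" "e \<le> 1"
    have "wl e 0 0 0 1 \<noteq> L0" by (rule wl_ne[where x=1]) (use e in auto)
    moreover have "\<forall>Q\<in>FF N - {P}. wl e 0 0 0 1 \<inter> Q \<noteq> {}"
    proof
      fix Q assume Q: "Q \<in> FF N - {P}"
      then have "Q \<in> FF N" "Q \<noteq> P" by auto
      then show "wl e 0 0 0 1 \<inter> Q \<noteq> {}"
        by (cases rule: FF_cases) (use W_S2_meets[OF N e] 2 in auto)
    qed
    ultimately show "wl e 0 0 0 1 \<noteq> L0 \<and> (\<forall>Q\<in>FF N - {P}. wl e 0 0 0 1 \<inter> Q \<noteq> {})" by blast
  qed
next
  case 3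
  show ?thesis
  proof (rule wit[OF V, of 0 0 1 "-1"])
    fix e :: real assume e: "0 < e" "e \<le> 1"
    have "wl e 0 0 1 (-1) \<noteq> L0" by (rule wl_ne[where x=0]) (use e in auto)
    moreover have "\<forall>Q\<in>FF N - {P}. wl e 0 0 1 (-1) \<inter> Q \<noteq> {}"
    proof
      fix Q assume Q: "Q \<in> FF N - {P}"
      then have "Q \<in> FF N" "Q \<noteq> P" by auto
      then show "wl e 0 0 1 (-1) \<inter> Q \<noteq> {}"
        by (cases rule: FF_cases) (use W_Sa_meets[OF N e] 3 in auto)
    qed
    ultimately show "wl e 0 0 1 (-1) \<noteq> L0 \<and> (\<forall>Q\<in>FF N - {P}. wl e 0 0 1 (-1) \<inter> Q \<noteq> {})" by blast
  qed
next
  case 4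
  show ?thesis
  proof (rule wit[OF V, of 0 "-1" 0 0])
    fix e :: real assume e: "0 < e" "e \<le> 1"
    have "wl e 0 (-1) 0 0 \<noteq> L0" by (rule wl_ne[where x=1]) (use e in auto)
    moreover have "\<forall>Q\<in>FF N - {P}. wl e 0 (-1) 0 0 \<inter> Q \<noteq> {}"
    proof
      fix Q assume Q: "Q \<in> FF N - {P}"
      then have "Q \<in> FF N" "Q \<noteq> P" by auto
      then show "wl e 0 (-1) 0 0 \<inter> Q \<noteq> {}"
        by (cases rule: FF_cases) (use W_Sb_meets[OF N e] 4 in auto)
    qed
    ultimately show "wl e 0 (-1) 0 0 \<noteq> L0 \<and> (\<forall>Q\<in>FF N - {P}. wl e 0 (-1) 0 0 \<inter> Q \<noteq> {})" by blast
  qed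
next
  case 5
  show ?thesis
  proof (rule wit[OF V, of 0 1 0 0])
    fix e :: real assume e: "0 < e" "e \<le> 1"
    have "wl e 0 1 0 0 \<noteq> L0" by (rule wl_ne[where x=1]) (use e in auto)
    moreover have "\<forall>Q\<in>FF N - {P}. wl e 0 1 0 0 \<inter> Q \<noteq> {}"
    proof
      fix Q assume Q: "Q \<in> FF N - {P}"
      then have "Q \<in> FF N" "Q \<noteq> P" by auto
      then show "wl e 0 1 0 0 \<inter> Q \<noteq> {}"
        by (cases rule: FF_cases) (use W_Sc_meets[OF N e] 5 in auto)
    qed
    ultimately show "wl e 0 1 0 0 \<noteq> L0 \<and> (\<forall>Q\<in>FF N - {P}. wl e 0 1 0 0 \<inter> Q \<noteq> {})" by blast
  qed
next
  case (6 k)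
  show ?thesis
  proof (rule wit[OF V, of 0 "real k" "-1" 1])
    fix e :: real assume e: "0 < e" "e \<le> 1"
    have k: "1 \<le> k" "k \<le> N" using 6 by auto
    have "wl e 0 (real k) (-1) 1 \<noteq> L0" by (rule wl_ne[where x=0]) (use e in auto)
    moreover have "\<forall>Q\<in>FF N - {P}. wl e 0 (real k) (-1) 1 \<inter> Q \<noteq> {}"
    proof
      fix Q assume Q: "Q \<in> FF N - {P}"
      then have "Q \<in> FF N" "Q \<noteq> P" by auto
      then show "wl e 0 (real k) (-1) 1 \<inter> Q \<noteq> {}"
        by (cases rule: FF_cases) (use Wk_meets[OF k e] 6 in auto)
    qed
    ultimately show "wl e 0 (real k) (-1) 1 \<noteq> L0 \<and> (\<forall>Q\<in>FF N - {P}. wl e 0 (real k) (-1) 1 \<inter> Q \<noteq> {})" by blast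
  qed
qed

lemma L0_wl: "L0 = wl 1 0 0 0 0" unfolding L0_def wl_def by (simp add: pt_zero)

lemma L0_trans:
  assumes N: "N \<ge> 1"
  shows "line_transversal L0 (FF N)"
proof -
  have C: "Cn N \<ge> 3" unfolding Cn_def by simp
  have "L0 \<inter> Q \<noteq> {}" if "Q \<in> FF N" for Q
    using that
  proof (cases rule: FF_cases)
    case 1 then show ?thesis unfolding L0_wl by (simp only:) (rule wl_meets_seg1, use C in auto)
  next
    case 2 then show ?thesis unfolding L0_wl by (simp only:) (rule wl_meets_seg2, use C in auto)
  next
    case 3 then show ?thesis unfolding L0_wl Fa_def
      by (simp only:) (rule wl_meets_fin[where x=2], use C in auto)
  next
    case 4 then show ?thesis unfolding L0_wl Fb_def
      by (simp only:) (rule wl_meets_fin[where x="1/2"], use C in auto)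
  next
    case 5 then show ?thesis unfolding L0_wl Fc_def
      by (simp only:) (rule wl_meets_fin[where x=2], use C N in \<open>auto simp: field_simps add_pos_nonneg\<close>)
  next
    case (6 j) then show ?thesis unfolding L0_wl chain_def
      by (simp only:) (rule wl_meets_fin[where x=0], use C 6 in \<open>auto simp: add_pos_nonneg\<close>)
  qed
  moreover have "is_line L0" unfolding L0_wl by (rule wl_line)
  ultimately show ?thesis unfolding line_transversal_def by blast
qed

lemma chain_inj: "inj_on (chain N) {1..N}"
proof (rule inj_onI)
  have C: "Cn N \<ge> 3" unfolding Cn_def by simp
  have mem: "pt (real k) 0 0 \<in> chain N k" if "k \<ge> 1" for k
  proof -
    have "pt (real k) (1*(0 + real k*0)) (1*(0 + real k*0)) \<in> chain N k"
      unfolding chain_def by (rule fin_mem) (use C that in \<open>auto simp: add_pos_nonneg\<close>)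
    then show ?thesis by simp
  qed
  have le: "x \<in> chain N j \<Longrightarrow> x$1 \<le> real j" for x j
    using fin_sub[of "- real j" "real j" "Cn N" "-1" "real j"] C unfolding chain_def by auto
  fix j k assume j: "j \<in> {1..N}" and k: "k \<in> {1..N}" and eq: "chain N j = chain N k"
  have "real k \<le> real j" using le[of "pt (real k) 0 0" j] mem[of k] eq k by simp
  moreover have "real j \<le> real k" using le[of "pt (real j) 0 0" k] mem[of j] eq j by simp
  ultimately show "j = k" by simp
qed

theorem theorem3:
  fixes n :: nat
  assumes "n > 0"
  shows "\<exists>L F. is_line L \<and> finite F \<and> card F \<ge> n \<and>
           (\<forall>P\<in>F. polytope P \<and> convex P) \<and> minimal_pinning F L"
proof (intro exI conjI)
  have N: "n \<ge> 1" using assms by simp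
  show "is_line L0" unfolding L0_wl by (rule wl_line)
  show fin: "finite (FF n)" unfolding FF_def by simp
  have "card (chain n ` {1..n}) = n" using card_image[OF chain_inj[of n]] by simp
  moreover have "card (chain n ` {1..n}) \<le> card (FF n)" using fin unfolding FF_def by (intro card_mono) auto
  ultimately show "card (FF n) \<ge> n" by simp
  show "\<forall>P\<in>FF n. polytope P \<and> convex P"
  proof
    fix P assume "P \<in> FF n"
    have pc: "finite S \<Longrightarrow> polytope (convex hull S) \<and> convex (convex hull S)" for S :: "(real^3) set"
      unfolding polytope_def by (auto simp: convex_convex_hull)
    from \<open>P \<in> FF n\<close> show "polytope P \<and> convex P"
      by (cases rule: FF_cases) (simp_all add: seg1_def seg2_def Fa_def Fb_def Fc_def chain_def fin_def pc)
  qed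
  have pins: "pins (FF n) L0"
    unfolding pins_def using L0_trans[OF N] open_VV L0_in_VV pinning[OF N] by blast
  show "minimal_pinning (FF n) L0"
    unfolding minimal_pinning_def
  proof (intro conjI allI impI pins notI)
    fix G assume G: "G \<subset> FF n" and pG: "pins G L0"
    then obtain P where P: "P \<in> FF n" "P \<notin> G" by blast
    from pG obtain V where V: "open_lines V" "L0 \<in> V" "\<forall>M\<in>V. line_transversal M G \<longrightarrow> M = L0"
      unfolding pins_def by blast
    obtain M where M: "M \<in> V" "M \<noteq> L0" "line_transversal M (FF n - {P})"
      using remove_not_pins[OF N P(1) V(1,2)] by blast
    have "G \<subseteq> FF n - {P}" using G P by auto
    then have "line_transversal M G" using M(3) unfolding line_transversal_def by blast
    then show False using V(3) M(1,2) by blast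
  qed
qed

end
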